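(* Let $\lambda\ge1$ and let $(b_j)_{j=1}^\infty$ be an infinite $\lambda$-triangular sequence in a Banach space $X$. Then for every $\varepsilon>0$, $(b_j)$ has a $\big(\frac{\lambda^2+1}{2}+\varepsilon\big)$-wide-$(s)$ subsequence.
   Context: Given $\lambda\ge1$, a finite or infinite sequence $(b_j)$ in a Banach space $X$ is $\lambda$-triangular if there is a sequence $(f_j)$ in $X^*$ with $f_i(b_j)=1$ for all $j\ge i$, $f_i(b_j)=0$ for all $j<i$, and $\|f_j\|\le\lambda$, $\|b_j\|\le\lambda$ for all $j$. A sequence $(b_j)$ is $\mu$-basic if $\|\sum_{j=1}^k c_jb_j\|\le\mu\|\sum_j c_jb_j\|$ for all $k$ and scalars $(c_j)$ with $\sum_jc_jb_j$ convergent. For $\lambda\ge1$, a sequence $(b_j)$ is $\lambda$-wide-$(s)$ if (a) it is $2\lambda$-basic; (b) $\|b_j\|\le\lambda$ for all $j$; (c) $|\sum_{j=k}^n c_j|\le\lambda\|\sum_{j=1}^n c_jb_j\|$ for all $1\le k\le n$ (within the length of the sequence) and scalars $c_1,\dots,c_n$. *)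

theory Defs
  imports "HOL-Analysis.Analysis"
begin

definition triangular :: "real \<Rightarrow> (nat \<Rightarrow> 'a::banach) \<Rightarrow> bool" where
  "triangular lam b \<longleftrightarrow>
     (\<exists>f :: nat \<Rightarrow> 'a \<Rightarrow> real.
        (\<forall>i. bounded_linear (f i) \<and> onorm (f i) \<le> lam) \<and>
        (\<forall>i j. j \<ge> i \<longrightarrow> f i (b j) = 1) \<and>
        (\<forall>i j. j < i \<longrightarrow> f i (b j) = 0)) \<and>
     (\<forall>j. norm (b j) \<le> lam)"

definition basic :: "real \<Rightarrow> (nat \<Rightarrow> 'a::banach) \<Rightarrow> bool" where
  "basic mu b \<longleftrightarrow>
     (\<forall>c :: nat \<Rightarrow> real. summable (\<lambda>j. c j *\<^sub>R b j) \<longrightarrow>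
        (\<forall>k. norm (\<Sum>j\<le>k. c j *\<^sub>R b j) \<le> mu * norm (\<Sum>j. c j *\<^sub>R b j)))"

definition wide_s :: "real \<Rightarrow> (nat \<Rightarrow> 'a::banach) \<Rightarrow> bool" where
  "wide_s lam b \<longleftrightarrow>
     basic (2 * lam) b \<and>
     (\<forall>j. norm (b j) \<le> lam) \<and>
     (\<forall>(c :: nat \<Rightarrow> real) k n. k \<le> n \<longrightarrow>
        \<bar>\<Sum>j=k..n. c j\<bar> \<le> lam * norm (\<Sum>j\<le>n. c j *\<^sub>R b j))"

end

theory Submission
  imports Defs
begin

definition hbgood :: "(nat \<Rightarrow> 'a::real_normed_vector) \<Rightarrow> nat \<Rightarrow> (nat \<Rightarrow> real) \<Rightarrow> bool" where
  "hbgood y N a \<longleftrightarrow> (\<forall>c. (\<Sum>j<N. c j * a j) \<le> norm (\<Sum>j<N. c j *\<^sub>R y j))"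

lemma hb_step:
  fixes y :: "nat \<Rightarrow> 'a::real_normed_vector"
  assumes g: "hbgood y N a"
  shows "\<exists>v. hbgood y (Suc N) (a(N:=v))"
proof -
  define \<phi> where "\<phi> c = (\<Sum>j<N. c j * a j)" for c
  define V where "V c = (\<Sum>j<N. c j *\<^sub>R y j)" for c
  have phiV: "\<phi> c \<le> norm (V c)" for c using g unfolding hbgood_def \<phi>_def V_def by blast
  have phiadd: "\<phi> (\<lambda>j. c j + d j) = \<phi> c + \<phi> d" for c d
    unfolding \<phi>_def by (simp add: distrib_right sum.distrib)
  have Vadd: "V (\<lambda>j. c j + d j) = V c + V d" for c d
    unfolding V_def by (simp add: scaleR_add_left sum.distrib)
  have phisc: "\<phi> (\<lambda>j. c j / t) = \<phi> c / t" for c t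
    unfolding \<phi>_def by (simp add: sum_divide_distrib)
  have Vsc: "V (\<lambda>j. c j / t) = (1/t) *\<^sub>R V c" for c t
    unfolding V_def by (simp add: scaleR_sum_right)
  define L where "L = {\<phi> c - norm (V c - y N) | c. True}"
  have ub: "l \<le> norm (V d + y N) - \<phi> d" if "l \<in> L" for l d
  proof -
    obtain c where l: "l = \<phi> c - norm (V c - y N)" using \<open>l \<in> L\<close> L_def by blast
    have "\<phi> c + \<phi> d \<le> norm (V c + V d)" using phiV[of "\<lambda>j. c j + d j"] phiadd Vadd by simp
    also have "\<dots> \<le> norm (V c - y N) + norm (V d + y N)"
      using norm_triangle_ineq[of "V c - y N" "V d + y N"] by simp
    finally show ?thesis using l by simp
  qed
  have ne: "L \<noteq> {}" unfolding L_def by blast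
  have bdd: "bdd_above L" using ub[of _ "\<lambda>_. 0"] unfolding bdd_above_def by blast
  define v where "v = Sup L"
  have v1: "\<phi> c - norm (V c - y N) \<le> v" for c
    unfolding v_def by (rule cSup_upper[OF _ bdd]) (auto simp: L_def)
  have v2: "v \<le> norm (V d + y N) - \<phi> d" for d
    unfolding v_def by (rule cSup_least[OF ne]) (use ub in blast)
  have "hbgood y (Suc N) (a(N:=v))"
    unfolding hbgood_def
  proof
    fix c
    have e1: "(\<Sum>j<Suc N. c j * (a(N:=v)) j) = \<phi> c + c N * v"
      unfolding \<phi>_def by (simp add: sum.lessThan_Suc)
    have e2: "(\<Sum>j<Suc N. c j *\<^sub>R y j) = V c + c N *\<^sub>R y N"
      unfolding V_def by (simp add: sum.lessThan_Suc)
    consider "c N = 0" | "c N > 0" | "c N < 0" by linarith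
    then have "\<phi> c + c N * v \<le> norm (V c + c N *\<^sub>R y N)"
    proof cases
      case 1 then show ?thesis using phiV by simp
    next
      case 2
      define s where "s = c N"
      have "v \<le> norm (V (\<lambda>j. c j / s) + y N) - \<phi> (\<lambda>j. c j / s)" by (rule v2)
      also have "V (\<lambda>j. c j / s) + y N = (1/s) *\<^sub>R (V c + s *\<^sub>R y N)"
        using 2 by (simp add: Vsc s_def scaleR_add_right)
      finally have "v \<le> norm (V c + s *\<^sub>R y N) / s - \<phi> c / s"
        using 2 by (simp add: phisc s_def)
      then have "s * v \<le> norm (V c + s *\<^sub>R y N) - \<phi> c"
        using 2 unfolding s_def by (simp add: field_simps)
      then show ?thesis unfolding s_def by (simp add: mult.commute)
    next
      case 3
      define t where "t = - c N"
      have tp: "t > 0" using 3 t_def by simp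
      have "\<phi> (\<lambda>j. c j / t) - norm (V (\<lambda>j. c j / t) - y N) \<le> v" by (rule v1)
      also have "V (\<lambda>j. c j / t) - y N = (1/t) *\<^sub>R V c - y N" by (simp only: Vsc)
      also have "\<dots> = (1/t) *\<^sub>R (V c + c N *\<^sub>R y N)"
        using tp unfolding t_def by (simp add: scaleR_add_right)
      finally have "\<phi> c / t - norm (V c + c N *\<^sub>R y N) / t \<le> v"
        using tp by (simp add: phisc)
      then have "\<phi> c - norm (V c + c N *\<^sub>R y N) \<le> t * v"
        using tp by (simp add: field_simps)
      then show ?thesis unfolding t_def by simp
    qed
    then show "(\<Sum>j<Suc N. c j * (a(N:=v)) j) \<le> norm (\<Sum>j<Suc N. c j *\<^sub>R y j)"
      using e1 e2 by simp
  qed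
  then show ?thesis by blast
qed

primrec hbA :: "(nat \<Rightarrow> 'a::real_normed_vector) \<Rightarrow> nat \<Rightarrow> nat \<Rightarrow> real" where
  "hbA y 0 = (\<lambda>_. norm (y 0))"
| "hbA y (Suc n) = (hbA y n)(Suc n := (SOME v. hbgood y (Suc (Suc n)) ((hbA y n)(Suc n := v))))"

lemma hbA_good: "hbgood y (Suc n) (hbA y n)"
proof (induction n)
  case 0
  show ?case unfolding hbgood_def by (simp add: abs_ge_self mult_right_mono)
next
  case (Suc n)
  show ?case using someI_ex[OF hb_step[OF Suc.IH]] by (simp del: fun_upd_apply)
qed

lemma hbA_stable: "j \<le> n \<Longrightarrow> n \<le> m \<Longrightarrow> hbA y m j = hbA y n j"
proof (induction m)
  case 0 then show ?case by simp
next
  case (Suc m)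
  show ?case
  proof (cases "n = Suc m")
    case False
    then have "n \<le> m" using Suc by simp
    then show ?thesis using Suc by simp
  qed simp
qed

lemma hb_seq:
  fixes y :: "nat \<Rightarrow> 'a::real_normed_vector"
  shows "\<exists>a. a 0 = norm (y 0) \<and> (\<forall>N. hbgood y N a)"
proof -
  define a where "a j = hbA y j j" for j
  have "hbgood y N a" for N
  proof (cases N)
    case 0 then show ?thesis by (simp add: hbgood_def)
  next
    case (Suc n)
    have st: "hbA y n j = hbA y j j" if "j \<le> n" for j using hbA_stable[of j j n] that by simp
    have "(\<Sum>j<Suc n. c j * a j) = (\<Sum>j<Suc n. c j * hbA y n j)" for c
      by (rule sum.cong) (auto simp: a_def st)
    then show ?thesis using hbA_good[of y n] Suc unfolding hbgood_def by simp
  qed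
  moreover have "a 0 = norm (y 0)" by (simp add: a_def)
  ultimately show ?thesis by blast
qed

lemma hb_gen:
  fixes y :: "nat \<Rightarrow> 'a::real_normed_vector" and J :: "'i set"
  assumes g: "\<forall>N. hbgood y N a" and fJ: "finite J"
  shows "(\<Sum>j\<in>J. w j * a (\<iota> j)) \<le> norm (\<Sum>j\<in>J. w j *\<^sub>R y (\<iota> j))"
proof -
  define N where "N = Suc (Max (insert 0 (\<iota> ` J)))"
  have sub: "\<iota> ` J \<subseteq> {..<N}" using fJ unfolding N_def by (auto simp: less_Suc_eq_le)
  define e where "e i = (\<Sum>j\<in>{x. x \<in> J \<and> \<iota> x = i}. w j)" for i
  have s1: "(\<Sum>i<N. e i * a i) = (\<Sum>j\<in>J. w j * a (\<iota> j))"
  proof -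
    have "(\<Sum>i<N. e i * a i) = (\<Sum>i<N. \<Sum>j\<in>{x. x \<in> J \<and> \<iota> x = i}. w j * a (\<iota> j))"
      unfolding e_def sum_distrib_right by (rule sum.cong) auto
    also have "\<dots> = (\<Sum>j\<in>J. w j * a (\<iota> j))" by (rule sum.group[OF fJ _ sub]) simp
    finally show ?thesis .
  qed
  have s2: "(\<Sum>i<N. e i *\<^sub>R y i) = (\<Sum>j\<in>J. w j *\<^sub>R y (\<iota> j))"
  proof -
    have "(\<Sum>i<N. e i *\<^sub>R y i) = (\<Sum>i<N. \<Sum>j\<in>{x. x \<in> J \<and> \<iota> x = i}. w j *\<^sub>R y (\<iota> j))"
      unfolding e_def scaleR_sum_left by (rule sum.cong) auto
    also have "\<dots> = (\<Sum>j\<in>J. w j *\<^sub>R y (\<iota> j))" by (rule sum.group[OF fJ _ sub]) simp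
    finally show ?thesis .
  qed
  show ?thesis using g s1 s2 unfolding hbgood_def by metis
qed

definition hbprop :: "(nat \<Rightarrow> 'a::real_normed_vector) \<Rightarrow> 'a \<Rightarrow> (nat \<Rightarrow> real) \<Rightarrow> bool" where
  "hbprop b v \<alpha> \<longleftrightarrow> (\<forall>s (J::nat set) w \<iota>. finite J \<longrightarrow>
     s * norm v + (\<Sum>j\<in>J. w j * \<alpha> (\<iota> j)) \<le> norm (s *\<^sub>R v + (\<Sum>j\<in>J. w j *\<^sub>R b (\<iota> j))))"

lemma hbprop_ex: "\<exists>\<alpha>. hbprop b v \<alpha>"
proof -
  define y where "y = case_nat v b"
  obtain a where a0: "a 0 = norm (y 0)" and g: "\<forall>N. hbgood y N a" using hb_seq by blast
  have "hbprop b v (\<lambda>i. a (Suc i))"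
    unfolding hbprop_def
  proof (intro allI impI)
    fix s :: real and J :: "nat set" and w :: "nat \<Rightarrow> real" and \<iota> :: "nat \<Rightarrow> nat"
    assume fJ: "finite J"
    define J' where "J' = insert None (Some ` J)"
    define w' where "w' = case_option s w"
    define \<iota>' where "\<iota>' = case_option 0 (\<lambda>j. Suc (\<iota> j))"
    have "(\<Sum>j\<in>J'. w' j * a (\<iota>' j)) \<le> norm (\<Sum>j\<in>J'. w' j *\<^sub>R y (\<iota>' j))"
      by (rule hb_gen[OF g]) (simp add: J'_def fJ)
    moreover have "(\<Sum>j\<in>J'. w' j * a (\<iota>' j)) = s * norm v + (\<Sum>j\<in>J. w j * a (Suc (\<iota> j)))"
      unfolding J'_def using fJ a0 by (simp add: sum.reindex w'_def \<iota>'_def y_def)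
    moreover have "(\<Sum>j\<in>J'. w' j *\<^sub>R y (\<iota>' j)) = s *\<^sub>R v + (\<Sum>j\<in>J. w j *\<^sub>R b (\<iota> j))"
      unfolding J'_def using fJ by (simp add: sum.reindex w'_def \<iota>'_def y_def)
    ultimately show "s * norm v + (\<Sum>j\<in>J. w j * a (Suc (\<iota> j))) \<le> norm (s *\<^sub>R v + (\<Sum>j\<in>J. w j *\<^sub>R b (\<iota> j)))"
      by simp
  qed
  then show ?thesis by blast
qed


lemma shrink1:
  fixes h :: "nat \<Rightarrow> real"
  assumes inf: "infinite A" and bnd: "\<forall>i. \<bar>h i\<bar> \<le> B" and th: "\<theta> > 0"
  shows "\<exists>A'\<subseteq>A. infinite A' \<and> (\<forall>x\<in>A'. \<forall>y\<in>A'. \<bar>h x - h y\<bar> \<le> \<theta>)"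
proof -
  define f where "f x = \<lfloor>h x / \<theta>\<rfloor>" for x
  have "f ` A \<subseteq> {\<lfloor>-B/\<theta>\<rfloor>..\<lfloor>B/\<theta>\<rfloor>}"
  proof
    fix z assume "z \<in> f ` A"
    then obtain x where z: "z = f x" by blast
    have "-B \<le> h x" "h x \<le> B" using bnd[rule_format, of x] by auto
    then have "-B/\<theta> \<le> h x/\<theta>" "h x/\<theta> \<le> B/\<theta>" using th divide_right_mono[of "-B" "h x" \<theta>] divide_right_mono[of "h x" B \<theta>] by auto
    then show "z \<in> {\<lfloor>-B/\<theta>\<rfloor>..\<lfloor>B/\<theta>\<rfloor>}" unfolding z f_def by (auto intro: floor_mono)
  qed
  then have "finite (f ` A)" by (rule finite_subset) simp
  from inf_img_fin_dom'[OF this inf] obtain y where y: "infinite (f -` {y} \<inter> A)" by blast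
  have "\<bar>h x1 - h x2\<bar> \<le> \<theta>" if "x1 \<in> f -` {y} \<inter> A" "x2 \<in> f -` {y} \<inter> A" for x1 x2
  proof -
    have e: "\<lfloor>h x1/\<theta>\<rfloor> = \<lfloor>h x2/\<theta>\<rfloor>" using that by (simp add: f_def)
    have "\<bar>h x1/\<theta> - h x2/\<theta>\<bar> < 1"
      using of_int_floor_le[of "h x1/\<theta>"] of_int_floor_le[of "h x2/\<theta>"]
        real_of_int_floor_add_one_gt[of "h x1/\<theta>"] real_of_int_floor_add_one_gt[of "h x2/\<theta>"] e
      by linarith
    then have "\<bar>h x1 - h x2\<bar> / \<theta> < 1" using th by (simp add: diff_divide_distrib[symmetric])
    then show ?thesis using th by (simp add: field_simps)
  qed
  then show ?thesis using y by (intro exI[of _ "f -` {y} \<inter> A"]) auto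
qed

lemma shrink_ex:
  fixes Hs :: "(nat \<Rightarrow> real) set"
  assumes fin: "finite Hs"
  shows "infinite A \<Longrightarrow> \<forall>\<alpha>\<in>Hs. \<forall>i. \<bar>\<alpha> i\<bar> \<le> B \<Longrightarrow> \<theta> > 0 \<Longrightarrow>
    \<exists>A'\<subseteq>A. infinite A' \<and> (\<forall>\<alpha>\<in>Hs. \<forall>x\<in>A'. \<forall>y\<in>A'. \<bar>\<alpha> x - \<alpha> y\<bar> \<le> \<theta>)"
  using fin
proof (induction Hs arbitrary: A rule: finite_induct)
  case empty then show ?case by blast
next
  case (insert h F)
  obtain A1 where A1: "A1 \<subseteq> A" "infinite A1" "\<forall>x\<in>A1. \<forall>y\<in>A1. \<bar>h x - h y\<bar> \<le> \<theta>"
    using shrink1[OF insert.prems(1) _ insert.prems(3), of h B] insert.prems(2) by blast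
  obtain A2 where A2: "A2 \<subseteq> A1" "infinite A2" "\<forall>\<alpha>\<in>F. \<forall>x\<in>A2. \<forall>y\<in>A2. \<bar>\<alpha> x - \<alpha> y\<bar> \<le> \<theta>"
    using insert.IH[OF A1(2)] insert.prems(2,3) by blast
  show ?case using A1 A2 by (intro exI[of _ A2]) blast
qed

definition shrink :: "nat set \<Rightarrow> (nat \<Rightarrow> real) set \<Rightarrow> real \<Rightarrow> nat set" where
  "shrink A Hs t = (SOME A'. A' \<subseteq> A \<and> infinite A' \<and> (\<forall>\<alpha>\<in>Hs. \<forall>x\<in>A'. \<forall>y\<in>A'. \<bar>\<alpha> x - \<alpha> y\<bar> \<le> t))"

primrec selst :: "(nat \<Rightarrow> (nat \<Rightarrow> real) set) \<Rightarrow> (nat \<Rightarrow> real) \<Rightarrow> nat \<Rightarrow> nat \<times> nat set \<times> (nat \<Rightarrow> real) set" where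
  "selst Hf th 0 = (0, UNIV, {})"
| "selst Hf th (Suc m) = (case selst Hf th m of (p, A, Hs) \<Rightarrow>
     (LEAST x. x \<in> shrink (A \<inter> {p<..}) (Hs \<union> Hf p) (th (Suc m)),
      shrink (A \<inter> {p<..}) (Hs \<union> Hf p) (th (Suc m)), Hs \<union> Hf p))"

lemma select:
  fixes Hf :: "nat \<Rightarrow> (nat \<Rightarrow> real) set"
  assumes fin: "\<forall>p. finite (Hf p)" and bnd: "\<forall>p. \<forall>\<alpha>\<in>Hf p. \<forall>i. \<bar>\<alpha> i\<bar> \<le> B"
    and th: "\<forall>i. \<theta> i > 0"
  shows "\<exists>r. strict_mono r \<and> (\<forall>k i \<alpha>. k < i \<longrightarrow> \<alpha> \<in> Hf (r k) \<longrightarrow> \<bar>\<alpha> (r (Suc i)) - \<alpha> (r i)\<bar> \<le> \<theta> i)"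
proof -
  define R where "R m = fst (selst Hf \<theta> m)" for m
  define AA where "AA m = fst (snd (selst Hf \<theta> m))" for m
  define HH where "HH m = snd (snd (selst Hf \<theta> m))" for m
  have HS: "HH (Suc m) = HH m \<union> Hf (R m)" for m
    unfolding HH_def R_def by (simp split: prod.splits)
  have AS: "AA (Suc m) = shrink (AA m \<inter> {R m<..}) (HH (Suc m)) (\<theta> (Suc m))" for m
    unfolding HH_def AA_def R_def by (simp split: prod.splits)
  have RS: "R (Suc m) = (LEAST x. x \<in> AA (Suc m))" for m
    unfolding HH_def AA_def R_def by (simp split: prod.splits)
  have inv: "infinite (AA m) \<and> finite (HH m) \<and> (\<forall>\<alpha>\<in>HH m. \<forall>i. \<bar>\<alpha> i\<bar> \<le> B) \<and> R m \<in> AA m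
     \<and> (m > 0 \<longrightarrow> AA m \<subseteq> AA (m - 1) \<inter> {R (m - 1)<..} \<and>
          (\<forall>\<alpha>\<in>HH m. \<forall>x\<in>AA m. \<forall>y\<in>AA m. \<bar>\<alpha> x - \<alpha> y\<bar> \<le> \<theta> m))" for m
  proof (induction m)
    case 0 then show ?case by (simp add: AA_def HH_def R_def)
  next
    case (Suc m)
    have f: "finite (HH (Suc m))" using Suc fin HS by simp
    have b: "\<forall>\<alpha>\<in>HH (Suc m). \<forall>i. \<bar>\<alpha> i\<bar> \<le> B" using Suc bnd HS by auto
    have "AA m \<inter> {R m<..} = AA m - {..R m}" by auto
    then have i: "infinite (AA m \<inter> {R m<..})" using Suc by simp
    have ex: "\<exists>A'. A' \<subseteq> AA m \<inter> {R m<..} \<and> infinite A' \<and> (\<forall>\<alpha>\<in>HH (Suc m). \<forall>x\<in>A'. \<forall>y\<in>A'. \<bar>\<alpha> x - \<alpha> y\<bar> \<le> \<theta> (Suc m))"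
      using shrink_ex[OF f i b] th by blast
    have P: "AA (Suc m) \<subseteq> AA m \<inter> {R m<..} \<and> infinite (AA (Suc m)) \<and> (\<forall>\<alpha>\<in>HH (Suc m). \<forall>x\<in>AA (Suc m). \<forall>y\<in>AA (Suc m). \<bar>\<alpha> x - \<alpha> y\<bar> \<le> \<theta> (Suc m))"
      unfolding AS shrink_def by (rule someI_ex[OF ex])
    then have "AA (Suc m) \<noteq> {}" by auto
    then have "R (Suc m) \<in> AA (Suc m)" unfolding RS by (metis LeastI_ex ex_in_conv)
    then show ?case using P f b by simp
  qed
  have Rinc: "R m < R (Suc m)" for m using inv[of "Suc m"] by auto
  then have sm: "strict_mono R" by (simp add: strict_mono_Suc_iff)
  have Amono: "AA n \<subseteq> AA m" if "m \<le> n" for m n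
    using that
  proof (induction n)
    case 0 then show ?case by simp
  next
    case (Suc n)
    show ?case
    proof (cases "m = Suc n")
      case False
      then have "m \<le> n" using Suc by simp
      then show ?thesis using Suc.IH inv[of "Suc n"] by auto
    qed simp
  qed
  have Hmono: "HH m \<subseteq> HH n" if "m \<le> n" for m n
    using that
  proof (induction n)
    case 0 then show ?case by simp
  next
    case (Suc n)
    show ?case
    proof (cases "m = Suc n")
      case False
      then have "m \<le> n" using Suc by simp
      then show ?thesis using Suc.IH HS[of n] by auto
    qed simp
  qed
  have "\<bar>\<alpha> (R (Suc i)) - \<alpha> (R i)\<bar> \<le> \<theta> i" if "k < i" "\<alpha> \<in> Hf (R k)" for k i \<alpha>
  proof -
    have "\<alpha> \<in> HH (Suc k)" using HS that by auto
    then have a: "\<alpha> \<in> HH i" using Hmono[of "Suc k" i] that by auto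
    have "R (Suc i) \<in> AA i" using inv[of "Suc i"] Amono[of i "Suc i"] by auto
    moreover have "R i \<in> AA i" using inv by blast
    moreover have "i > 0" using that by simp
    ultimately show ?thesis using inv[of i] a by blast
  qed
  then show ?thesis using sm by blast
qed


lemma abel_bound:
  fixes u v \<theta> :: "nat \<Rightarrow> real"
  assumes dv: "\<And>i. a \<le> i \<Longrightarrow> i < n \<Longrightarrow> \<bar>v (Suc i) - v i\<bar> \<le> \<theta> i"
    and tl: "\<And>i. a \<le> i \<Longrightarrow> i \<le> n \<Longrightarrow> \<bar>\<Sum>j=i..n. u j\<bar> \<le> L"
    and an: "a \<le> n"
  shows "\<bar>\<Sum>j=a..n. u j * (v j - v a)\<bar> \<le> L * (\<Sum>i=a..<n. \<theta> i)"
proof -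
  have "\<forall>a'. n - a' = d \<longrightarrow> a \<le> a' \<longrightarrow> a' \<le> n \<longrightarrow>
      \<bar>\<Sum>j=a'..n. u j * (v j - v a')\<bar> \<le> L * (\<Sum>i=a'..<n. \<theta> i)" for d
  proof (induction d)
    case 0
    show ?case by auto
  next
    case (Suc d)
    show ?case
    proof (intro allI impI)
      fix a' assume h: "n - a' = Suc d" "a \<le> a'" "a' \<le> n"
      then have lt: "a' < n" by simp
      have IH: "\<bar>\<Sum>j=Suc a'..n. u j * (v j - v (Suc a'))\<bar> \<le> L * (\<Sum>i=Suc a'..<n. \<theta> i)"
        using Suc.IH h lt by simp
      have "(\<Sum>j=a'..n. u j * (v j - v a')) = (\<Sum>j=Suc a'..n. u j * (v j - v a'))"
        using lt by (simp add: sum.atLeast_Suc_atMost)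
      also have "\<dots> = (\<Sum>j=Suc a'..n. u j * (v j - v (Suc a'))) + (v (Suc a') - v a') * (\<Sum>j=Suc a'..n. u j)"
        by (simp add: sum_distrib_left sum.distrib[symmetric] algebra_simps)
      finally have e: "(\<Sum>j=a'..n. u j * (v j - v a')) = \<dots>" .
      have t: "\<bar>\<Sum>j=Suc a'..n. u j\<bar> \<le> L" using tl h lt by simp
      have d1: "\<bar>v (Suc a') - v a'\<bar> \<le> \<theta> a'" using dv h lt by simp
      have "\<bar>(v (Suc a') - v a') * (\<Sum>j=Suc a'..n. u j)\<bar> \<le> \<theta> a' * L"
        unfolding abs_mult by (rule mult_mono[OF d1 t]) (use d1 in auto)
      moreover have "(\<Sum>i=a'..<n. \<theta> i) = \<theta> a' + (\<Sum>i=Suc a'..<n. \<theta> i)"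
        using lt by (simp add: sum.atLeast_Suc_lessThan)
      ultimately show "\<bar>\<Sum>j=a'..n. u j * (v j - v a')\<bar> \<le> L * (\<Sum>i=a'..<n. \<theta> i)"
        using e IH by (simp add: algebra_simps)
    qed
  qed
  then show ?thesis using an by blast
qed

lemma geo_half: "(\<Sum>i<n. 1 / 2 ^ Suc i :: real) = 1 - 1 / 2 ^ n"
  by (induction n) (auto simp: field_simps)


lemma sm_le: "strict_mono (r::nat \<Rightarrow> nat) \<Longrightarrow> (r x \<le> r y) = (x \<le> y)"
  by (metis le_less linorder_not_le strict_mono_def)
lemma sm_lt: "strict_mono (r::nat \<Rightarrow> nat) \<Longrightarrow> (r x < r y) = (x < y)"
  by (metis le_less linorder_not_le strict_mono_def)
lemma sm_eq: "strict_mono (r::nat \<Rightarrow> nat) \<Longrightarrow> (r x = r y) = (x = y)"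
  by (metis sm_le order_antisym order_refl)

lemma hbpropD:
  fixes J :: "nat set"
  assumes "hbprop b v \<alpha>" "finite J"
  shows "s * norm v + (\<Sum>j\<in>J. w j * \<alpha> (\<iota> j)) \<le> norm (s *\<^sub>R v + (\<Sum>j\<in>J. w j *\<^sub>R b (\<iota> j)))"
  using assms(1)[unfolded hbprop_def, rule_format, OF assms(2)] .

lemma hbprop_bound:
  assumes "hbprop b v \<alpha>"
  shows "\<bar>\<alpha> i\<bar> \<le> norm (b i)"
proof -
  have f: "finite {0::nat}" by simp
  note h1 = hbpropD[where J="{0::nat}" and s=0 and w="\<lambda>_. 1" and \<iota>="\<lambda>_. i", OF assms f]
  note h2 = hbpropD[where J="{0::nat}" and s=0 and w="\<lambda>_. -1" and \<iota>="\<lambda>_. i", OF assms f]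
  from h1 h2 show ?thesis by simp
qed

theorem corollary16:
  fixes b :: "nat \<Rightarrow> 'a::banach" and lam eps :: real
  assumes "lam \<ge> 1" and "triangular lam b" and "eps > 0"
  shows "\<exists>r. strict_mono r \<and> wide_s ((lam\<^sup>2 + 1) / 2 + eps) (b \<circ> r)"
proof -
  obtain f :: "nat \<Rightarrow> 'a \<Rightarrow> real" where fbl: "\<forall>i. bounded_linear (f i) \<and> onorm (f i) \<le> lam"
    and f1: "\<forall>i j. j \<ge> i \<longrightarrow> f i (b j) = 1" and f0: "\<forall>i j. j < i \<longrightarrow> f i (b j) = 0"
    using assms(2) unfolding triangular_def by blast
  have bn: "\<forall>j. norm (b j) \<le> lam" using assms(2) unfolding triangular_def by blast
  have lam0: "lam > 0" using assms(1) by simp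
  have tail: "\<bar>\<Sum>j=i..n. c j\<bar> \<le> lam * norm (\<Sum>j\<le>n. c j *\<^sub>R b (r j))"
    if sm: "strict_mono r" and iq: "i \<le> n" for r :: "nat \<Rightarrow> nat" and c :: "nat \<Rightarrow> real" and i n :: nat
  proof -
    have bl: "bounded_linear (f (r i))" using fbl by blast
    have "f (r i) (\<Sum>j\<le>n. c j *\<^sub>R b (r j)) = (\<Sum>j\<le>n. c j * f (r i) (b (r j)))"
      by (simp add: real_vector.linear_sum[OF bounded_linear.linear[OF bl]] linear_simps(5)[OF bl])
    also have "\<dots> = (\<Sum>j\<le>n. if i \<le> j then c j else 0)"
    proof (rule sum.cong)
      fix j assume "j \<in> {..n}"
      show "c j * f (r i) (b (r j)) = (if i \<le> j then c j else 0)"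
      proof (cases "i \<le> j")
        case True
        then have "r i \<le> r j" using sm_le[OF sm] by simp
        then show ?thesis using True f1 by simp
      next
        case False
        then have "r j < r i" using sm_lt[OF sm] by simp
        then show ?thesis using False f0 by simp
      qed
    qed simp
    also have "\<dots> = (\<Sum>j\<in>{x\<in>{..n}. i \<le> x}. c j)"
      using sum.inter_filter[of "{..n}" c "\<lambda>x. i \<le> x"] by simp
    also have "{x\<in>{..n}. i \<le> x} = {i..n}" by auto
    finally have e: "f (r i) (\<Sum>j\<le>n. c j *\<^sub>R b (r j)) = (\<Sum>j=i..n. c j)" .
    have "norm (f (r i) (\<Sum>j\<le>n. c j *\<^sub>R b (r j))) \<le> onorm (f (r i)) * norm (\<Sum>j\<le>n. c j *\<^sub>R b (r j))"
      by (rule onorm[OF bl])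
    also have "\<dots> \<le> lam * norm (\<Sum>j\<le>n. c j *\<^sub>R b (r j))"
      using fbl by (simp add: mult_right_mono)
    finally show ?thesis using e by simp
  qed
  have coef: "\<bar>c j\<bar> \<le> 2 * lam * norm (\<Sum>j\<le>n. c j *\<^sub>R b (r j))"
    if sm: "strict_mono r" and jn: "j \<le> n" for r :: "nat \<Rightarrow> nat" and c :: "nat \<Rightarrow> real" and j n :: nat
  proof (cases "j < n")
    case True
    have "(\<Sum>i=j..n. c i) = c j + (\<Sum>i=Suc j..n. c i)" using jn by (simp add: sum.atLeast_Suc_atMost)
    then show ?thesis using tail[OF sm jn, of c] tail[OF sm, of "Suc j" n c] True by simp
  next
    case False
    then have "j = n" using jn by simp
    then show ?thesis using tail[OF sm jn, of c] norm_ge_zero[of "\<Sum>j\<le>n. c j *\<^sub>R b (r j)"] lam0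
      by simp
  qed
  define \<delta> where "\<delta> = eps / (lam + 1)"
  have d0: "\<delta> > 0" using assms lam0 by (simp add: \<delta>_def)
  define \<eta> where "\<eta> p = \<delta> / ((real p + 1) * lam)" for p :: nat
  have e0: "\<eta> p > 0" for p using d0 lam0 by (simp add: \<eta>_def)
  define K where "K p = \<lceil>2 * lam / \<eta> p\<rceil> + 1" for p :: nat
  define \<theta> where "\<theta> i = \<delta> / 2 ^ Suc i" for i :: nat
  define \<Psi> where "\<Psi> v = (SOME \<alpha>. hbprop b v \<alpha>)" for v
  have \<Psi>: "hbprop b v (\<Psi> v)" for v unfolding \<Psi>_def by (rule someI_ex[OF hbprop_ex])
  define Zs where "Zs p = {z :: nat \<Rightarrow> int. \<forall>i. (i \<in> {..p} \<longrightarrow> z i \<in> {-K p..K p}) \<and> (i \<notin> {..p} \<longrightarrow> z i = 0)}" for p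
  define Hf where "Hf p = (\<lambda>z. \<Psi> (\<Sum>i\<le>p. (\<eta> p * of_int (z i)) *\<^sub>R b i)) ` Zs p" for p
  have finH: "\<forall>p. finite (Hf p)"
  proof
    fix p
    have "finite (Zs p)" unfolding Zs_def by (rule finite_set_of_finite_funs) auto
    then show "finite (Hf p)" unfolding Hf_def by simp
  qed
  have bndH: "\<forall>p. \<forall>\<alpha>\<in>Hf p. \<forall>i. \<bar>\<alpha> i\<bar> \<le> lam"
    unfolding Hf_def using hbprop_bound[OF \<Psi>] bn by (auto intro: order_trans)
  have th0: "\<forall>i. \<theta> i > 0" using d0 by (simp add: \<theta>_def)
  obtain r where sm: "strict_mono r"
    and sel: "\<forall>k i \<alpha>. k < i \<longrightarrow> \<alpha> \<in> Hf (r k) \<longrightarrow> \<bar>\<alpha> (r (Suc i)) - \<alpha> (r i)\<bar> \<le> \<theta> i"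
    using select[OF finH bndH th0] by blast
  have core: "norm (\<Sum>j\<le>k. c j *\<^sub>R b (r j)) \<le> 1 + lam\<^sup>2 + (2 + lam) * \<delta>"
    if n1: "norm (\<Sum>j\<le>n. c j *\<^sub>R b (r j)) = 1" and kn: "k < n" for c :: "nat \<Rightarrow> real" and k n :: nat
  proof -
    have cb: "\<bar>c j\<bar> \<le> 2 * lam" if "j \<le> n" for j using coef[OF sm that, of c] n1 by simp
    define p where "p = r k"
    define z where "z i = (\<Sum>j\<le>k. if r j = i then \<lfloor>c j / \<eta> p\<rfloor> else 0)" for i
    have zr: "z (r j) = \<lfloor>c j / \<eta> p\<rfloor>" if "j \<le> k" for j
    proof -
      have "z (r j) = (\<Sum>j'\<le>k. if j' = j then \<lfloor>c j' / \<eta> p\<rfloor> else 0)"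
        unfolding z_def by (rule sum.cong) (auto simp: sm_eq[OF sm])
      also have "\<dots> = \<lfloor>c j / \<eta> p\<rfloor>" using that by simp
      finally show ?thesis .
    qed
    have z0: "z i = 0" if "i \<notin> r ` {..k}" for i
      unfolding z_def using that by (intro sum.neutral) auto
    have rle: "r j \<le> p" if "j \<le> k" for j using that sm_le[OF sm] p_def by simp
    have fl: "-K p \<le> \<lfloor>c j / \<eta> p\<rfloor> \<and> \<lfloor>c j / \<eta> p\<rfloor> \<le> K p" if "j \<le> n" for j
    proof -
      have "\<bar>c j\<bar> \<le> 2 * lam" using cb that by simp
      then have "\<bar>c j / \<eta> p\<bar> \<le> 2 * lam / \<eta> p" using e0[of p] by (simp add: divide_right_mono)
      then have "- (2 * lam / \<eta> p) \<le> c j / \<eta> p \<and> c j / \<eta> p \<le> 2 * lam / \<eta> p" by linarith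
      moreover have "2 * lam / \<eta> p \<le> of_int \<lceil>2 * lam / \<eta> p\<rceil>" by (rule le_of_int_ceiling)
      moreover have "of_int \<lfloor>c j / \<eta> p\<rfloor> \<le> c j / \<eta> p" by simp
      moreover have "c j / \<eta> p < of_int \<lfloor>c j / \<eta> p\<rfloor> + 1" by simp
      ultimately have "- (of_int (K p) :: real) < of_int \<lfloor>c j / \<eta> p\<rfloor> + 1 \<and> of_int \<lfloor>c j / \<eta> p\<rfloor> \<le> (of_int (K p) :: real)"
        unfolding K_def of_int_add of_int_1 by linarith
      then show ?thesis by linarith
    qed
    have K0: "0 \<le> K p"
    proof -
      have "0 \<le> 2 * lam / \<eta> p" using e0[of p] lam0 by simp
      then have "0 \<le> \<lceil>2 * lam / \<eta> p\<rceil>" by simp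
      then show ?thesis unfolding K_def by simp
    qed
    have zZ: "z \<in> Zs p"
      unfolding Zs_def
    proof (intro CollectI allI conjI impI)
      fix i assume "i \<in> {..p}"
      show "z i \<in> {-K p..K p}"
      proof (cases "i \<in> r ` {..k}")
        case True
        then obtain j where j: "j \<le> k" "i = r j" by auto
        then show ?thesis using zr[OF j(1)] fl[of j] kn by simp
      next
        case False then show ?thesis using z0 K0 by simp
      qed
    next
      fix i assume "i \<notin> {..p}"
      then have "i \<notin> r ` {..k}" using rle by auto
      then show "z i = 0" by (rule z0)
    qed
    define V where "V = (\<Sum>i\<le>p. (\<eta> p * of_int (z i)) *\<^sub>R b i)"
    have Veq: "V = (\<Sum>j\<le>k. (\<eta> p * of_int \<lfloor>c j / \<eta> p\<rfloor>) *\<^sub>R b (r j))"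
    proof -
      have "V = (\<Sum>i\<in>r ` {..k}. (\<eta> p * of_int (z i)) *\<^sub>R b i)"
        unfolding V_def by (rule sum.mono_neutral_right) (use rle z0 in auto)
      also have "\<dots> = (\<Sum>j\<le>k. (\<eta> p * of_int (z (r j))) *\<^sub>R b (r j))"
        by (subst sum.reindex) (auto intro: strict_mono_imp_inj_on[OF sm])
      also have "\<dots> = (\<Sum>j\<le>k. (\<eta> p * of_int \<lfloor>c j / \<eta> p\<rfloor>) *\<^sub>R b (r j))"
        by (rule sum.cong) (auto simp: zr)
      finally show ?thesis .
    qed
    define \<alpha> where "\<alpha> = \<Psi> V"
    have h\<alpha>: "hbprop b V \<alpha>" unfolding \<alpha>_def by (rule \<Psi>)
    have \<alpha>H: "\<alpha> \<in> Hf (r k)" unfolding Hf_def \<alpha>_def V_def p_def[symmetric] using zZ by blast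
    have hb: "1 * norm V + (\<Sum>j\<in>{Suc k..n}. c j * \<alpha> (r j)) \<le> norm (1 *\<^sub>R V + (\<Sum>j\<in>{Suc k..n}. c j *\<^sub>R b (r j)))"
      by (rule hbpropD[where J="{Suc k..n}" and s=1 and w=c and \<iota>=r, OF h\<alpha>]) simp
    define S where "S m = (\<Sum>j\<le>m. c j *\<^sub>R b (r j))" for m
    define T where "T = (\<Sum>j\<in>{Suc k..n}. c j *\<^sub>R b (r j))"
    have split: "S n = S k + T"
    proof -
      have "{..n} = {..k} \<union> {Suc k..n}" using kn by auto
      then show ?thesis unfolding S_def T_def by (simp add: sum.union_disjoint)
    qed
    have app: "norm (S k - V) \<le> \<delta>"
    proof -
      have "S k - V = (\<Sum>j\<le>k. (c j - \<eta> p * of_int \<lfloor>c j / \<eta> p\<rfloor>) *\<^sub>R b (r j))"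
        unfolding S_def Veq by (simp add: sum_subtractf scaleR_diff_left)
      also have "norm \<dots> \<le> (\<Sum>j\<le>k. \<eta> p * lam)"
      proof (rule sum_norm_le)
        fix j
        have ep: "\<eta> p > 0" by (rule e0)
        have a1: "\<eta> p * of_int \<lfloor>c j / \<eta> p\<rfloor> \<le> \<eta> p * (c j / \<eta> p)"
          using ep by (intro mult_left_mono) auto
        have a2: "\<eta> p * (c j / \<eta> p) < \<eta> p * (of_int \<lfloor>c j / \<eta> p\<rfloor> + 1)"
          using ep by (intro mult_strict_left_mono) auto
        have "\<bar>c j - \<eta> p * of_int \<lfloor>c j / \<eta> p\<rfloor>\<bar> \<le> \<eta> p"
          using a1 a2 ep by (simp add: algebra_simps)
        then show "norm ((c j - \<eta> p * of_int \<lfloor>c j / \<eta> p\<rfloor>) *\<^sub>R b (r j)) \<le> \<eta> p * lam"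
          using bn ep by (simp add: mult_mono)
      qed
      also have "\<dots> = (real k + 1) * \<eta> p * lam" by simp
      also have "\<dots> \<le> (real p + 1) * \<eta> p * lam"
        using e0[of p] lam0 strict_mono_imp_increasing[OF sm, of k] p_def
        by (intro mult_right_mono) auto
      also have "\<dots> = \<delta>"
      proof -
        have pos: "(real p + 1) * lam \<noteq> 0" using lam0 by simp
        have "(real p + 1) * \<eta> p * lam = \<delta> * (((real p + 1) * lam) / ((real p + 1) * lam))"
          unfolding \<eta>_def by (simp add: field_simps)
        also have "\<dots> = \<delta>" using pos by simp
        finally show ?thesis .
      qed
      finally show ?thesis .
    qed
    have nVT: "norm (V + T) \<le> 1 + \<delta>"
    proof -
      have "V + T = S n - (S k - V)" using split by (simp add: algebra_simps)
      then have "norm (V + T) \<le> norm (S n) + norm (S k - V)" using norm_triangle_ineq4[of "S n" "S k - V"] by metis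
      then show ?thesis using app n1 S_def by simp
    qed
    define t where "t = (\<Sum>j=Suc k..n. c j)"
    have tb: "\<bar>t\<bar> \<le> lam" using tail[OF sm, of "Suc k" n c] kn n1 t_def by simp
    have ab: "\<bar>\<alpha> (r (Suc k))\<bar> \<le> lam" using bndH \<alpha>H by blast
    have tab: "\<bar>t * \<alpha> (r (Suc k))\<bar> \<le> lam\<^sup>2"
      unfolding abs_mult power2_eq_square by (rule mult_mono[OF tb ab]) (use lam0 in auto)
    have decomp: "(\<Sum>j\<in>{Suc k..n}. c j * \<alpha> (r j)) = t * \<alpha> (r (Suc k)) + (\<Sum>j=Suc k..n. c j * (\<alpha> (r j) - \<alpha> (r (Suc k))))"
      unfolding t_def by (simp add: sum_distrib_right sum_distrib_left sum_subtractf algebra_simps)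
    have ab2: "\<bar>\<Sum>j=Suc k..n. c j * (\<alpha> (r j) - \<alpha> (r (Suc k)))\<bar> \<le> lam * (\<Sum>i=Suc k..<n. \<theta> i)"
    proof (rule abel_bound[where u = c and v = "\<lambda>j. \<alpha> (r j)"])
      fix i assume "Suc k \<le> i" "i < n"
      then show "\<bar>\<alpha> (r (Suc i)) - \<alpha> (r i)\<bar> \<le> \<theta> i" using sel \<alpha>H by (meson Suc_le_lessD)
    next
      fix i assume "Suc k \<le> i" "i \<le> n"
      then show "\<bar>\<Sum>j=i..n. c j\<bar> \<le> lam" using tail[OF sm, of i n c] n1 by simp
    qed (use kn in simp)
    have ths: "(\<Sum>i=Suc k..<n. \<theta> i) \<le> \<delta>"
    proof -
      have "(\<Sum>i=Suc k..<n. \<theta> i) \<le> (\<Sum>i<n. \<theta> i)"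
        by (rule sum_mono2) (use th0 in \<open>auto intro: less_imp_le\<close>)
      also have "\<dots> = \<delta> * (\<Sum>i<n. 1 / 2 ^ Suc i)"
        unfolding \<theta>_def sum_distrib_left by simp
      also have "\<dots> = \<delta> * (1 - 1 / 2 ^ n)" by (simp only: geo_half)
      also have "\<dots> \<le> \<delta>" using d0 by simp
      finally show ?thesis .
    qed
    have "lam * (\<Sum>i=Suc k..<n. \<theta> i) \<le> lam * \<delta>" using ths lam0 by simp
    then have nV: "norm V \<le> 1 + \<delta> + lam\<^sup>2 + lam * \<delta>"
      using hb nVT decomp tab ab2 T_def by (simp add: abs_le_iff) 
    have "norm (S k) \<le> norm V + norm (S k - V)" by (metis add.commute diff_add_cancel norm_triangle_ineq)
    then show ?thesis using nV app S_def by (simp add: algebra_simps)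
  qed
  define C where "C = lam\<^sup>2 + 1 + 2 * eps"
  have dC: "1 + lam\<^sup>2 + (2 + lam) * \<delta> \<le> C"
  proof -
    have "(2 + lam) * \<delta> = eps * ((2 + lam) / (lam + 1))" unfolding \<delta>_def by simp
    also have "\<dots> \<le> eps * 2"
      using assms(3) lam0 by (intro mult_left_mono) (auto simp: field_simps)
    finally show ?thesis unfolding C_def by simp
  qed
  have C1: "C \<ge> 1" unfolding C_def using assms(3) by simp
  have fin: "norm (\<Sum>j\<le>k. c j *\<^sub>R b (r j)) \<le> C * norm (\<Sum>j\<le>n. c j *\<^sub>R b (r j))"
    if kn: "k \<le> n" for c :: "nat \<Rightarrow> real" and k n :: nat
  proof (cases "k = n")
    case True
    then show ?thesis using C1 by (simp add: mult_le_cancel_right1)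
  next
    case False
    then have kn': "k < n" using kn by simp
    define m where "m = norm (\<Sum>j\<le>n. c j *\<^sub>R b (r j))"
    show ?thesis
    proof (cases "m = 0")
      case True
      have "c j = 0" if "j \<le> k" for j using coef[OF sm, of j n c] that kn True m_def by simp
      then have "(\<Sum>j\<le>k. c j *\<^sub>R b (r j)) = 0" by simp
      then show ?thesis using True m_def by simp
    next
      case False
      then have m0: "m > 0" using m_def by simp
      define c' where "c' j = c j / m" for j
      have sc: "(\<Sum>j\<le>q. c' j *\<^sub>R b (r j)) = (1 / m) *\<^sub>R (\<Sum>j\<le>q. c j *\<^sub>R b (r j))" for q
        unfolding c'_def by (simp add: scaleR_sum_right)
      have "norm (\<Sum>j\<le>n. c' j *\<^sub>R b (r j)) = 1" using sc[of n] m0 m_def by simp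
      from core[OF this kn'] have "norm (\<Sum>j\<le>k. c' j *\<^sub>R b (r j)) \<le> C" using dC by simp
      then have "norm (\<Sum>j\<le>k. c j *\<^sub>R b (r j)) / m \<le> C" using sc[of k] m0 by simp
      then show ?thesis using m0 m_def by (simp add: field_simps)
    qed
  qed
  have basic: "basic (2 * ((lam\<^sup>2 + 1) / 2 + eps)) (b \<circ> r)"
    unfolding basic_def
  proof (intro allI impI)
    fix c :: "nat \<Rightarrow> real" and k :: nat
    assume su: "summable (\<lambda>j. c j *\<^sub>R (b \<circ> r) j)"
    have lim: "(\<lambda>n. C * norm (\<Sum>j\<le>n. c j *\<^sub>R (b \<circ> r) j)) \<longlonglongrightarrow> C * norm (\<Sum>j. c j *\<^sub>R (b \<circ> r) j)"
      by (intro tendsto_mult_left tendsto_norm summable_LIMSEQ'[OF su])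
    have "norm (\<Sum>j\<le>k. c j *\<^sub>R (b \<circ> r) j) \<le> C * norm (\<Sum>j. c j *\<^sub>R (b \<circ> r) j)"
      by (rule LIMSEQ_le_const[OF lim]) (use fin in \<open>auto simp: o_def\<close>)
    moreover have "2 * ((lam\<^sup>2 + 1) / 2 + eps) = C" unfolding C_def by simp
    ultimately show "norm (\<Sum>j\<le>k. c j *\<^sub>R (b \<circ> r) j) \<le> 2 * ((lam\<^sup>2 + 1) / 2 + eps) * norm (\<Sum>j. c j *\<^sub>R (b \<circ> r) j)"
      by simp
  qed
  have lamle: "lam \<le> (lam\<^sup>2 + 1) / 2 + eps"
  proof -
    have "0 \<le> (lam - 1)\<^sup>2" by simp
    then have "2 * lam \<le> lam\<^sup>2 + 1" by (simp add: power2_eq_square algebra_simps)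
    then show ?thesis using assms(3) by (simp add: field_simps)
  qed
  have "wide_s ((lam\<^sup>2 + 1) / 2 + eps) (b \<circ> r)"
    unfolding wide_s_def
  proof (intro conjI basic allI impI)
    fix j show "norm ((b \<circ> r) j) \<le> (lam\<^sup>2 + 1) / 2 + eps" using bn lamle by (auto intro: order_trans)
  next
    fix c :: "nat \<Rightarrow> real" and k n :: nat
    assume "k \<le> n"
    then have "\<bar>\<Sum>j=k..n. c j\<bar> \<le> lam * norm (\<Sum>j\<le>n. c j *\<^sub>R b (r j))" by (rule tail[OF sm])
    also have "\<dots> \<le> ((lam\<^sup>2 + 1) / 2 + eps) * norm (\<Sum>j\<le>n. c j *\<^sub>R b (r j))"
      using lamle by (simp add: mult_right_mono)
    finally show "\<bar>\<Sum>j=k..n. c j\<bar> \<le> ((lam\<^sup>2 + 1) / 2 + eps) * norm (\<Sum>j\<le>n. c j *\<^sub>R (b \<circ> r) j)"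
      by (simp add: o_def)
  qed
  then show ?thesis using sm by blast
qed



end
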